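(* Let $X$ be a Banach space and $T\in\mathcal B(X)$ be approximable in the $\mathcal B(X)$ norm by finite-rank operators. Then either $f=Tf$ has a nonzero solution $f\in X$, or $(I-T)^{-1}\in\mathcal B(X)$. In the latter case: (i) if $T$ has finite rank and belongs to a (not necessarily closed) Banach operator subalgebra $\widehat X\subset\mathcal B(X)$, then $(I-T)^{-1}-I\in\widehat X$; (ii) if $\widehat X\subset\mathcal B(X)$ is a subalgebra such that $T_1TT_2\in\widehat X$ with $\|T_1TT_2\|_{\widehat X}\lesssim\|T_1\|_{\widehat X}\|T\|_{\mathcal B(X)}\|T_2\|_{\widehat X}$ for all $T_1,T_2\in\widehat X$, $T\in\mathcal B(X)$, and $T\in\widehat X$ is approximable by finite-rank operators in the $\widehat X$ norm, then $(I-T)^{-1}-I\in\widehat X$. *)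

theory Defs
  imports "HOL-Analysis.Analysis"
begin

(* Bounded linear operators on a (real) Banach space X are the type
  'a =>L 'a with the operator norm. *)

definition finite_rank :: "('a::real_normed_vector \<Rightarrow>\<^sub>L 'a) \<Rightarrow> bool" where
  "finite_rank T \<longleftrightarrow> (\<exists>B. finite B \<and> range (blinfun_apply T) \<subseteq> span B)"

definition approx_finite_rank :: "('a::real_normed_vector \<Rightarrow>\<^sub>L 'a) \<Rightarrow> bool" where
  "approx_finite_rank T \<longleftrightarrow> T \<in> closure {S. finite_rank S}"

(* A (not necessarily closed) Banach operator subalgebra: a subset A of B(X),
  closed under the algebra operations, carrying its own norm N in which it is a
  Banach algebra (complete, submultiplicative), continuously embedded in B(X).*)
definition banach_op_subalgebra ::
  "('a::real_normed_vector \<Rightarrow>\<^sub>L 'a) set \<Rightarrow> (('a \<Rightarrow>\<^sub>L 'a) \<Rightarrow> real) \<Rightarrow> bool" where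
  "banach_op_subalgebra A N \<longleftrightarrow>
     0 \<in> A \<and>
     (\<forall>S\<in>A. \<forall>T\<in>A. S + T \<in> A) \<and>
     (\<forall>c. \<forall>S\<in>A. c *\<^sub>R S \<in> A) \<and>
     (\<forall>S\<in>A. \<forall>T\<in>A. S o\<^sub>L T \<in> A) \<and>
     (\<forall>S\<in>A. 0 \<le> N S \<and> (N S = 0 \<longleftrightarrow> S = 0)) \<and>
     (\<forall>S\<in>A. \<forall>T\<in>A. N (S + T) \<le> N S + N T) \<and>
     (\<forall>c. \<forall>S\<in>A. N (c *\<^sub>R S) = \<bar>c\<bar> * N S) \<and>
     (\<forall>S\<in>A. \<forall>T\<in>A. N (S o\<^sub>L T) \<le> N S * N T) \<and>
     (\<forall>f :: nat \<Rightarrow> ('a \<Rightarrow>\<^sub>L 'a). (\<forall>n. f n \<in> A) \<and>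
         (\<forall>e>0. \<exists>M. \<forall>m\<ge>M. \<forall>n\<ge>M. N (f m - f n) < e)
        \<longrightarrow> (\<exists>L\<in>A. (\<lambda>n. N (f n - L)) \<longlonglongrightarrow> 0)) \<and>
     (\<exists>C. \<forall>S\<in>A. norm S \<le> C * N S)"

end

theory Submission
  imports Defs "HOL-Analysis.Finite_Function_Topology"
begin

lemma inj_surj_subspace:
  fixes f :: "'b::real_vector \<Rightarrow> 'b"
  assumes lf: "linear f" and sU: "subspace U" and UG: "U \<subseteq> span G" and fG: "finite G"
    and fU: "f ` U \<subseteq> U" and inj: "inj_on f U"
  shows "U \<subseteq> f ` U"
proof -
  obtain B where B: "B \<subseteq> U" "independent B" "U \<subseteq> span B"
    by (rule basis_exists)
  have BG: "B \<subseteq> span G" using B(1) UG by (rule order_trans)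
  have finB: "finite B" using independent_span_bound[OF fG B(2) BG] by (rule conjunct1)
  have spB: "span B \<subseteq> U" using span_minimal[OF B(1) sU] .
  have ind: "independent (f ` B)"
    using linear_independent_injective_image[OF lf B(2) inj_on_subset[OF inj spB]] .
  have card: "card (f ` B) = card B" using card_image[OF inj_on_subset[OF inj B(1)]] .
  have "f ` B \<subseteq> f ` U" using B(1) by (rule image_mono)
  then have fBU: "f ` B \<subseteq> span B" using fU B(3) by (meson order_trans)
  show ?thesis
  proof
    fix v assume v: "v \<in> U"
    have "v \<in> span (f ` B)"
    proof (rule ccontr)
      assume nv: "v \<notin> span (f ` B)"
      then have vn: "v \<notin> f ` B" using span_base by metis
      have i2: "independent (insert v (f ` B))" using independent_insertI[OF nv ind] .
      have "v \<in> span B" using v B(3) by (rule subsetD[rotated])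
      then have s2: "insert v (f ` B) \<subseteq> span B" using fBU by (rule insert_subsetI)
      have c1: "card (insert v (f ` B)) \<le> card B"
        using independent_span_bound[OF finB i2 s2] by (rule conjunct2)
      have "finite (f ` B)" using finB by (rule finite_imageI)
      then have "card (insert v (f ` B)) = Suc (card (f ` B))" using vn by (rule card_insert_disjoint)
      then show False using c1 card by simp
    qed
    then have "v \<in> f ` span B" using linear_span_image[OF lf] by metis
    then show "v \<in> f ` U" using spB by blast
  qed
qed

lemma bl_id_r[simp]: "X o\<^sub>L id_blinfun = X" by (rule blinfun_eqI) simp
lemma bl_id_l[simp]: "id_blinfun o\<^sub>L X = X" by (rule blinfun_eqI) simp

fun pw :: "('a::real_normed_vector \<Rightarrow>\<^sub>L 'a) \<Rightarrow> nat \<Rightarrow> ('a \<Rightarrow>\<^sub>L 'a)" where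
  "pw T 0 = id_blinfun"
| "pw T (Suc k) = T o\<^sub>L pw T k"

lemma pw_Suc': "pw T (Suc k) = pw T k o\<^sub>L T"
proof (induction k)
  case 0 show ?case by (auto intro!: blinfun_eqI)
next
  case (Suc k)
  have "pw T (Suc (Suc k)) = T o\<^sub>L (pw T k o\<^sub>L T)" using Suc by simp
  then show ?case by (auto intro!: blinfun_eqI)
qed

lemma pw_comm: "pw T k o\<^sub>L T = T o\<^sub>L pw T k"
  by (metis pw.simps(2) pw_Suc')

lemma lookup_scaleR_pm: "Poly_Mapping.lookup (c *\<^sub>R p) i = c *\<^sub>R Poly_Mapping.lookup p i"
proof -
  have "finite {i. c *\<^sub>R Poly_Mapping.lookup p i \<noteq> 0}"
    by (rule finite_subset[of _ "Poly_Mapping.keys p"]) (auto simp: in_keys_iff)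
  then show ?thesis by (simp add: scaleR_poly_mapping_def)
qed

lemma single_scaleR: "Poly_Mapping.single b (c *\<^sub>R v) = c *\<^sub>R Poly_Mapping.single b v"
  by (rule poly_mapping_eqI) (simp add: lookup_scaleR_pm lookup_single when_def)

lemma linear_single: "linear (Poly_Mapping.single b)"
  by (rule linearI) (simp_all add: single_add single_scaleR)

lemma linear_compose_left: "linear (\<lambda>R. (T::'a::real_normed_vector \<Rightarrow>\<^sub>L 'a) o\<^sub>L R)"
  by (rule bounded_linear.linear[OF bounded_bilinear.bounded_linear_right[OF bounded_bilinear_blinfun_compose]])

lemma subspace_comm: "subspace {X. X o\<^sub>L T = T o\<^sub>L (X::'a::real_normed_vector \<Rightarrow>\<^sub>L 'a)}"
  unfolding subspace_def
  by (auto intro!: blinfun_eqI simp: blinfun.add_left blinfun.add_right blinfun.scaleR_left blinfun.scaleR_right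
      dest!: fun_cong[where f="blinfun_apply (_ o\<^sub>L _)"] ) (metis blinfun_apply_blinfun_compose)+

lemma FR:
  fixes T :: "'a::real_normed_vector \<Rightarrow>\<^sub>L 'a"
  assumes fr: "finite_rank T" and inj: "\<And>f. blinfun_apply T f = f \<Longrightarrow> f = 0"
  shows "\<exists>R \<in> span (range (\<lambda>k. pw T (Suc k))). R - (T o\<^sub>L R) = T \<and> R o\<^sub>L T = T o\<^sub>L R"
proof -
  obtain B0 where B0: "finite B0" "range (blinfun_apply T) \<subseteq> span B0"
    using fr unfolding finite_rank_def by blast
  obtain D where D: "D \<subseteq> range (blinfun_apply T)" "independent D" "range (blinfun_apply T) \<subseteq> span D"
    by (rule basis_exists)
  have "D \<subseteq> span B0" using D(1) B0(2) by (rule order_trans)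
  then have finD: "finite D" using independent_span_bound[OF B0(1) D(2)] by blast
  define x where "x = (\<lambda>b. SOME y. blinfun_apply T y = b)"
  have Tx: "blinfun_apply T (x b) = b" if "b \<in> D" for b
  proof -
    have "\<exists>y. blinfun_apply T y = b" using D(1) that by blast
    then show ?thesis unfolding x_def by (rule someI_ex)
  qed
  define U where "U = span (range (\<lambda>k. pw T (Suc (Suc k))))"
  have sU: "subspace U" unfolding U_def by simp
  have fact: "U \<subseteq> {R. \<exists>Q::'a \<Rightarrow>\<^sub>L 'a. R = Q o\<^sub>L T}"
    unfolding U_def
  proof (rule span_minimal)
    show "range (\<lambda>k. pw T (Suc (Suc k))) \<subseteq> {R. \<exists>Q::'a \<Rightarrow>\<^sub>L 'a. R = Q o\<^sub>L T}"
    proof clarify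
      fix k show "\<exists>Q::'a \<Rightarrow>\<^sub>L 'a. pw T (Suc (Suc k)) = Q o\<^sub>L T" using pw_Suc'[of T "Suc k"] by blast
    qed
    have ad: "(Q1 + Q2) o\<^sub>L T = (Q1 o\<^sub>L T) + (Q2 o\<^sub>L T)" for Q1 Q2 :: "'a \<Rightarrow>\<^sub>L 'a"
      by (rule bounded_bilinear.add_left[OF bounded_bilinear_blinfun_compose])
    have sc: "(c *\<^sub>R Q) o\<^sub>L T = c *\<^sub>R (Q o\<^sub>L T)" for c and Q :: "'a \<Rightarrow>\<^sub>L 'a"
      by (rule bounded_bilinear.scaleR_left[OF bounded_bilinear_blinfun_compose])
    show "subspace {R. \<exists>Q::'a \<Rightarrow>\<^sub>L 'a. R = Q o\<^sub>L T}"
      unfolding subspace_def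
    proof (intro conjI ballI allI)
      have "(0::'a \<Rightarrow>\<^sub>L 'a) = 0 o\<^sub>L T" by simp
      then show "0 \<in> {R. \<exists>Q::'a \<Rightarrow>\<^sub>L 'a. R = Q o\<^sub>L T}" by blast
    next
      fix a b :: "'a \<Rightarrow>\<^sub>L 'a" assume "a \<in> {R. \<exists>Q::'a \<Rightarrow>\<^sub>L 'a. R = Q o\<^sub>L T}" "b \<in> {R. \<exists>Q::'a \<Rightarrow>\<^sub>L 'a. R = Q o\<^sub>L T}"
      then obtain Q1 Q2 :: "'a \<Rightarrow>\<^sub>L 'a" where "a = Q1 o\<^sub>L T" "b = Q2 o\<^sub>L T" by blast
      then have "a + b = (Q1 + Q2) o\<^sub>L T" using ad by simp
      then show "a + b \<in> {R. \<exists>Q::'a \<Rightarrow>\<^sub>L 'a. R = Q o\<^sub>L T}" by blast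
    next
      fix c and a :: "'a \<Rightarrow>\<^sub>L 'a" assume "a \<in> {R. \<exists>Q::'a \<Rightarrow>\<^sub>L 'a. R = Q o\<^sub>L T}"
      then obtain Q1 :: "'a \<Rightarrow>\<^sub>L 'a" where "a = Q1 o\<^sub>L T" by blast
      then have "c *\<^sub>R a = (c *\<^sub>R Q1) o\<^sub>L T" using sc by simp
      then show "c *\<^sub>R a \<in> {R. \<exists>Q::'a \<Rightarrow>\<^sub>L 'a. R = Q o\<^sub>L T}" by blast
    qed
  qed
  have rng: "U \<subseteq> {R. \<forall>y. blinfun_apply R y \<in> span D}"
    unfolding U_def
  proof (rule span_minimal)
    show "range (\<lambda>k. pw T (Suc (Suc k))) \<subseteq> {R. \<forall>y. blinfun_apply R y \<in> span D}"
    proof clarify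
      fix k y
      have "blinfun_apply (pw T (Suc (Suc k))) y = blinfun_apply T (blinfun_apply (pw T (Suc k)) y)"
        by (simp only: pw.simps(2) blinfun_apply_blinfun_compose)
      also have "\<dots> \<in> span D" using D(3) by (rule subsetD) (rule rangeI)
      finally show "blinfun_apply (pw T (Suc (Suc k))) y \<in> span D" .
    qed
    show "subspace {R. \<forall>y. blinfun_apply R y \<in> span D}"
      unfolding subspace_def
      by (auto simp: blinfun.add_left blinfun.scaleR_left span_add span_scale span_zero)
  qed
  define L where "L = (\<lambda>R::'a \<Rightarrow>\<^sub>L 'a. \<Sum>b\<in>D. Poly_Mapping.single b (blinfun_apply R (x b)))"
  have lL: "linear L"
    unfolding L_def
    by (rule linearI) (simp_all add: blinfun.add_left blinfun.scaleR_left single_add single_scaleR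
        sum.distrib scaleR_sum_right)
  have lookL: "Poly_Mapping.lookup (L R) b = blinfun_apply R (x b)" if "b \<in> D" for R b
    unfolding L_def lookup_sum using that finD
    by (simp add: lookup_single when_def sum.delta)
  define E where "E = (\<lambda>(b,j). Poly_Mapping.single b j) ` (D \<times> D)"
  have finE: "finite E" unfolding E_def using finD by simp
  have LU: "L ` U \<subseteq> span E"
  proof clarify
    fix R assume "R \<in> U"
    then have Rin: "blinfun_apply R (x b) \<in> span D" for b using rng by blast
    have "Poly_Mapping.single b (blinfun_apply R (x b)) \<in> span E" if b: "b \<in> D" for b
    proof -
      have "Poly_Mapping.single b (blinfun_apply R (x b)) \<in> Poly_Mapping.single b ` span D"
        using Rin by blast
      also have "\<dots> = span (Poly_Mapping.single b ` D)"
        by (rule linear_span_image[OF linear_single, symmetric])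
      also have "\<dots> \<subseteq> span E"
        by (rule span_mono) (auto simp: E_def b)
      finally show ?thesis .
    qed
    then show "L R \<in> span E" unfolding L_def by (auto intro: span_sum)
  qed
  have injL: "inj_on L U"
    unfolding linear_inj_on_iff_eq_0[OF lL sU]
  proof (intro ballI impI)
    fix R assume R: "R \<in> U" and L0: "L R = 0"
    obtain Q where Q: "R = Q o\<^sub>L T" using fact R by blast
    have "blinfun_apply Q b = 0" if "b \<in> D" for b
    proof -
      have "blinfun_apply R (x b) = 0" using lookL[OF that, of R] L0 by simp
      then show ?thesis using Q Tx[OF that] by simp
    qed
    then have "blinfun_apply Q v = 0" if "v \<in> span D" for v
      by (rule linear_eq_0_on_span[OF bounded_linear.linear[OF blinfun.bounded_linear_right] _ that])
    then have "blinfun_apply R y = 0" for y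
    proof -
      have "blinfun_apply T y \<in> span D" using D(3) by (rule subsetD) (rule rangeI)
      then show ?thesis using Q \<open>\<And>v. v \<in> span D \<Longrightarrow> blinfun_apply Q v = 0\<close> by simp
    qed
    then show "R = 0" by (auto intro!: blinfun_eqI)
  qed
  obtain G where G: "G \<subseteq> U" "independent G" "U \<subseteq> span G"
    by (rule basis_exists)
  have spG: "span G \<subseteq> U" using span_minimal[OF G(1) sU] .
  have "independent (L ` G)"
    using linear_independent_injective_image[OF lL G(2) inj_on_subset[OF injL spG]] .
  moreover have "L ` G \<subseteq> span E" using LU G(1) by blast
  ultimately have "finite (L ` G)" using independent_span_bound[OF finE] by blast
  then have finG: "finite G" using finite_imageD[OF _ inj_on_subset[OF injL G(1)]] by blast
  define f where "f = (\<lambda>R::'a \<Rightarrow>\<^sub>L 'a. R - (T o\<^sub>L R))"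
  have lf: "linear f" unfolding f_def
    by (rule linear_compose_sub[OF linear_id linear_compose_left, unfolded id_def])
  have TU: "T o\<^sub>L R \<in> U" if "R \<in> U" for R
  proof -
    have "(\<lambda>R. T o\<^sub>L R) ` U = span ((\<lambda>R. T o\<^sub>L R) ` range (\<lambda>k. pw T (Suc (Suc k))))"
      unfolding U_def by (rule linear_span_image[OF linear_compose_left, symmetric])
    also have "\<dots> \<subseteq> U" unfolding U_def
    proof (rule span_mono, clarify)
      fix k have "T o\<^sub>L pw T (Suc (Suc k)) = pw T (Suc (Suc (Suc k)))" by (rule pw.simps(2)[symmetric])
      then show "T o\<^sub>L pw T (Suc (Suc k)) \<in> range (\<lambda>k. pw T (Suc (Suc k)))"
        using rangeI[of "\<lambda>k. pw T (Suc (Suc k))" "Suc k"] by (simp only:)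
    qed
    finally show ?thesis using that by blast
  qed
  have fU: "f ` U \<subseteq> U"
  proof clarify
    fix R assume R: "R \<in> U"
    show "f R \<in> U" unfolding f_def by (rule subspace_diff[OF sU R TU[OF R]])
  qed
  have injf: "inj_on f U"
    unfolding linear_inj_on_iff_eq_0[OF lf sU]
  proof (intro ballI impI)
    fix R assume "R \<in> U" "f R = 0"
    then have "blinfun_apply T (blinfun_apply R y) = blinfun_apply R y" for y
    proof -
      have "R - (T o\<^sub>L R) = 0" using \<open>f R = 0\<close> unfolding f_def .
      then have "R = T o\<^sub>L R" by simp
      then have "blinfun_apply R y = blinfun_apply (T o\<^sub>L R) y" by simp
      then show ?thesis by simp
    qed
    then have "blinfun_apply R y = 0" for y by (rule inj)
    then show "R = 0" by (intro blinfun_eqI) simp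
  qed
  have "pw T (Suc (Suc 0)) \<in> U" unfolding U_def
    by (rule span_base) (rule rangeI[of "\<lambda>k. pw T (Suc (Suc k))" 0])
  then have "pw T (Suc (Suc 0)) \<in> f ` U"
    by (rule subsetD[OF inj_surj_subspace[OF lf sU G(3) finG fU injf]])
  then obtain R' where R'0: "R' \<in> U" "pw T (Suc (Suc 0)) = f R'" by (rule imageE)
  then have R': "R' \<in> U" "f R' = pw T (Suc (Suc 0))" by simp_all
  define R where "R = T + R'"
  have sub: "U \<subseteq> span (range (\<lambda>k. pw T (Suc k)))"
    unfolding U_def
  proof (rule span_mono, clarify)
    fix k show "pw T (Suc (Suc k)) \<in> range (\<lambda>k. pw T (Suc k))"
      by (rule rangeI[of "\<lambda>k. pw T (Suc k)" "Suc k"])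
  qed
  have Rin: "R \<in> span (range (\<lambda>k. pw T (Suc k)))"
  proof -
    have "T \<in> span (range (\<lambda>k. pw T (Suc k)))"
    proof -
      have "pw T (Suc 0) \<in> span (range (\<lambda>k. pw T (Suc k)))"
        by (rule span_base) (rule rangeI[of "\<lambda>k. pw T (Suc k)" 0])
      then show ?thesis by simp
    qed
    then show ?thesis unfolding R_def by (rule span_add) (rule subsetD[OF sub R'(1)])
  qed
  have ar: "X o\<^sub>L (Y + Z) = (X o\<^sub>L Y) + (X o\<^sub>L Z)" for X Y Z :: "'a \<Rightarrow>\<^sub>L 'a"
    by (rule bounded_bilinear.add_right[OF bounded_bilinear_blinfun_compose])
  have "R - (T o\<^sub>L R) = T + (R' - (T o\<^sub>L R')) - (T o\<^sub>L T)"
    unfolding R_def ar by simp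
  also have "\<dots> = T" using R'(2) unfolding f_def by simp
  finally have eq: "R - (T o\<^sub>L R) = T" .
  have "range (\<lambda>k. pw T (Suc k)) \<subseteq> {X. X o\<^sub>L T = T o\<^sub>L X}" using pw_comm by blast
  then have "span (range (\<lambda>k. pw T (Suc k))) \<subseteq> {X. X o\<^sub>L T = T o\<^sub>L X}"
    by (rule span_minimal[OF _ subspace_comm])
  then have comm: "R o\<^sub>L T = T o\<^sub>L R" using Rin by blast
  show ?thesis using Rin eq comm by blast
qed

lemma bl_compose_assoc: "(a o\<^sub>L b) o\<^sub>L c = a o\<^sub>L (b o\<^sub>L (c::'a::real_normed_vector \<Rightarrow>\<^sub>L 'a))"
  by (rule blinfun_eqI) simp

lemma inverse_unique:
  fixes S S' M :: "'a::real_normed_vector \<Rightarrow>\<^sub>L 'a"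
  assumes "S o\<^sub>L M = id_blinfun" "M o\<^sub>L S' = id_blinfun"
  shows "S = S'"
proof -
  have "S = S o\<^sub>L (M o\<^sub>L S')" using assms(2) by (auto intro!: blinfun_eqI)
  also have "\<dots> = (S o\<^sub>L M) o\<^sub>L S'" by (simp add: bl_compose_assoc)
  also have "\<dots> = S'" using assms(1) by (auto intro!: blinfun_eqI)
  finally show ?thesis .
qed

lemma bsa_UNIV: "banach_op_subalgebra (UNIV :: ('a::banach \<Rightarrow>\<^sub>L 'a) set) norm"
  unfolding banach_op_subalgebra_def
proof (intro conjI allI impI ballI)
  fix f :: "nat \<Rightarrow> ('a \<Rightarrow>\<^sub>L 'a)"
  assume "(\<forall>n. f n \<in> UNIV) \<and> (\<forall>e>0. \<exists>M. \<forall>m\<ge>M. \<forall>n\<ge>M. norm (f m - f n) < e)"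
  then have "Cauchy f" unfolding Cauchy_def dist_norm by blast
  then obtain L where "f \<longlonglongrightarrow> L" using Cauchy_convergent_iff convergent_def by blast
  then have "(\<lambda>n. norm (f n - L)) \<longlonglongrightarrow> 0"
    using tendsto_norm_zero_iff LIM_zero_iff by (metis Lim_null tendsto_norm_zero)
  then show "\<exists>L\<in>UNIV. (\<lambda>n. norm (f n - L)) \<longlonglongrightarrow> 0" by blast
next
  show "\<exists>C. \<forall>S\<in>UNIV. norm S \<le> C * norm (S::'a \<Rightarrow>\<^sub>L 'a)" by (rule exI[of _ 1]) simp
qed (auto simp: norm_blinfun_compose norm_triangle_ineq)

lemma neumannA:
  fixes E :: "'a::real_normed_vector \<Rightarrow>\<^sub>L 'a"
  assumes bsa: "banach_op_subalgebra A N" and EA: "E \<in> A" and NE: "N E < 1"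
  shows "\<exists>L\<in>A. (id_blinfun - E) o\<^sub>L (id_blinfun + L) = id_blinfun \<and>
                (id_blinfun + L) o\<^sub>L (id_blinfun - E) = id_blinfun"
proof -
  note b = bsa[unfolded banach_op_subalgebra_def]
  have A0: "0 \<in> A" using b by (elim conjE)
  have Aadd': "\<forall>S\<in>A. \<forall>T\<in>A. S + T \<in> A" using b by (elim conjE)
  have Ascale': "\<forall>c. \<forall>S\<in>A. c *\<^sub>R S \<in> A" using b by (elim conjE)
  have Acomp': "\<forall>S\<in>A. \<forall>T\<in>A. S o\<^sub>L T \<in> A" using b by (elim conjE)
  have Npos': "\<forall>S\<in>A. 0 \<le> N S \<and> (N S = 0 \<longleftrightarrow> S = 0)" using b by (elim conjE)
  have Ntri': "\<forall>S\<in>A. \<forall>T\<in>A. N (S + T) \<le> N S + N T" using b by (elim conjE)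
  have Nscale': "\<forall>c. \<forall>S\<in>A. N (c *\<^sub>R S) = \<bar>c\<bar> * N S" using b by (elim conjE)
  have Nmult': "\<forall>S\<in>A. \<forall>T\<in>A. N (S o\<^sub>L T) \<le> N S * N T" using b by (elim conjE)
  have Ncomplete': "\<forall>f :: nat \<Rightarrow> ('a \<Rightarrow>\<^sub>L 'a). (\<forall>n. f n \<in> A) \<and>
         (\<forall>e>0. \<exists>M. \<forall>m\<ge>M. \<forall>n\<ge>M. N (f m - f n) < e)
        \<longrightarrow> (\<exists>L\<in>A. (\<lambda>n. N (f n - L)) \<longlonglongrightarrow> 0)" using b by (elim conjE)
  have C': "\<exists>C. \<forall>S\<in>A. norm S \<le> C * N S" using b by (elim conjE)
  have Aadd: "\<And>S T. S \<in> A \<Longrightarrow> T \<in> A \<Longrightarrow> S + T \<in> A" using Aadd' by blast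
  have Ascale: "\<And>c S. S \<in> A \<Longrightarrow> c *\<^sub>R S \<in> A" using Ascale' by blast
  have Acomp: "\<And>S T. S \<in> A \<Longrightarrow> T \<in> A \<Longrightarrow> S o\<^sub>L T \<in> A" using Acomp' by blast
  have Npos: "\<And>S. S \<in> A \<Longrightarrow> 0 \<le> N S" using Npos' by blast
  have Ntri: "\<And>S T. S \<in> A \<Longrightarrow> T \<in> A \<Longrightarrow> N (S + T) \<le> N S + N T" using Ntri' by blast
  have Nscale: "\<And>c S. S \<in> A \<Longrightarrow> N (c *\<^sub>R S) = \<bar>c\<bar> * N S" using Nscale' by blast
  have Nmult: "\<And>S T. S \<in> A \<Longrightarrow> T \<in> A \<Longrightarrow> N (S o\<^sub>L T) \<le> N S * N T" using Nmult' by blast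
  have Ncomplete: "\<And>f. (\<forall>n. f n \<in> A) \<Longrightarrow> (\<forall>e>0. \<exists>M. \<forall>m\<ge>M. \<forall>n\<ge>M. N (f m - f n) < e)
        \<Longrightarrow> (\<exists>L\<in>A. (\<lambda>n. N (f n - L)) \<longlonglongrightarrow> 0)" using Ncomplete' by blast
  have N0: "N 0 = 0" using Npos' A0 by blast
  obtain C where C: "\<And>S. S \<in> A \<Longrightarrow> norm S \<le> C * N S" using C' by blast
  have Aminus: "S - T \<in> A" if "S \<in> A" "T \<in> A" for S T
    using Aadd[OF that(1) Ascale[OF that(2), of "-1"]] by simp
  have Nminus: "N (S - T) = N (T - S)" if "S \<in> A" "T \<in> A" for S T
    using Nscale[OF Aminus[OF that(2,1)], of "-1"] by simp
  define q where "q = N E"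
  have q0: "0 \<le> q" and q1: "q < 1" using Npos[OF EA] NE q_def by auto
  have pwA: "pw E (Suc k) \<in> A" for k
  proof (induction k)
    case 0 show ?case using EA by simp
  next
    case (Suc k)
    have "pw E (Suc (Suc k)) = E o\<^sub>L pw E (Suc k)" by (rule pw.simps(2))
    then show ?case using Acomp[OF EA Suc] by simp
  qed
  have pwN: "N (pw E (Suc k)) \<le> q ^ Suc k" for k
  proof (induction k)
    case 0 show ?case using EA by (simp add: q_def)
  next
    case (Suc k)
    have "N (pw E (Suc (Suc k))) \<le> N E * N (pw E (Suc k))"
      using Nmult[OF EA pwA[of k]] by simp
    also have "\<dots> \<le> q * q ^ Suc k" using Suc q0 q_def by (simp add: mult_left_mono)
    finally show ?case by simp
  qed
  define s where "s n = (\<Sum>k<n. pw E (Suc k))" for n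
  have sSuc: "s (Suc n) = s n + pw E (Suc n)" for n by (simp add: s_def del: pw.simps)
  have sA: "s n \<in> A" for n
  proof (induction n)
    case 0 show ?case by (simp add: s_def A0)
  next
    case (Suc n) show ?case unfolding sSuc using Aadd[OF Suc pwA] .
  qed
  have sdiff: "N (s m - s n) \<le> (q ^ Suc n - q ^ Suc m) / (1 - q)" if "n \<le> m" for m n
    using that
  proof (induction m rule: dec_induct)
    case base show ?case by (simp add: N0)
  next
    case (step m)
    have "s (Suc m) - s n = (s m - s n) + pw E (Suc m)" by (simp add: sSuc)
    then have "N (s (Suc m) - s n) \<le> N (s m - s n) + N (pw E (Suc m))"
      using Ntri[OF Aminus[OF sA sA] pwA, of m n m] by (simp only:)
    also have "\<dots> \<le> (q ^ Suc n - q ^ Suc m) / (1 - q) + q ^ Suc m"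
      using step.IH pwN by (intro add_mono) auto
    also have "\<dots> = (q ^ Suc n - q ^ Suc (Suc m)) / (1 - q)"
      using q1 by (simp add: field_simps)
    finally show ?case .
  qed
  have sbound: "N (s m - s n) \<le> q ^ Suc (min m n) / (1 - q)" for m n
  proof (cases "n \<le> m")
    case True
    have "N (s m - s n) \<le> (q ^ Suc n - q ^ Suc m) / (1 - q)" using sdiff[OF True] .
    also have "\<dots> \<le> q ^ Suc n / (1 - q)"
      using q0 q1 by (intro divide_right_mono) auto
    finally show ?thesis using True by (simp add: min_absorb2)
  next
    case False
    then have "N (s m - s n) = N (s n - s m)" using Nminus sA by blast
    also have "\<dots> \<le> (q ^ Suc m - q ^ Suc n) / (1 - q)" using sdiff False by simp
    also have "\<dots> \<le> q ^ Suc m / (1 - q)"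
      using q0 q1 by (intro divide_right_mono) auto
    finally show ?thesis using False by (simp add: min_absorb1)
  qed
  have "(\<lambda>n. q ^ n) \<longlonglongrightarrow> 0" using q0 q1 by (intro LIMSEQ_power_zero) simp
  then have qlim: "(\<lambda>n. q ^ Suc n / (1 - q)) \<longlonglongrightarrow> 0"
    by (intro tendsto_divide_zero LIMSEQ_Suc)
  have "\<exists>L\<in>A. (\<lambda>n. N (s n - L)) \<longlonglongrightarrow> 0"
  proof (rule Ncomplete)
    show "\<forall>n. s n \<in> A" using sA by blast
    show "\<forall>e>0. \<exists>M. \<forall>m\<ge>M. \<forall>n\<ge>M. N (s m - s n) < e"
    proof (intro allI impI)
      fix e :: real assume "e > 0"
      have "eventually (\<lambda>n. q ^ Suc n / (1 - q) < e) sequentially"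
        using order_tendstoD(2)[OF qlim \<open>e > 0\<close>] .
      then obtain M where M: "\<And>n. n \<ge> M \<Longrightarrow> q ^ Suc n / (1 - q) < e"
        unfolding eventually_sequentially by blast
      have "N (s m - s n) < e" if "m \<ge> M" "n \<ge> M" for m n
        using sbound[of m n] M[of "min m n"] that by simp
      then show "\<exists>M. \<forall>m\<ge>M. \<forall>n\<ge>M. N (s m - s n) < e" by blast
    qed
  qed
  then obtain L where LA: "L \<in> A" and L: "(\<lambda>n. N (s n - L)) \<longlonglongrightarrow> 0" by blast
  have sL: "s \<longlonglongrightarrow> L"
  proof -
    have l1: "(\<lambda>n. \<bar>C\<bar> * N (s n - L)) \<longlonglongrightarrow> 0"
      using tendsto_mult_right_zero[OF L] by simp
    have b1: "\<forall>n. norm (s n - L) \<le> \<bar>C\<bar> * N (s n - L)"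
      using order_trans[OF C[OF Aminus[OF sA LA]] mult_right_mono[OF abs_ge_self Npos[OF Aminus[OF sA LA]]]] by blast
    have "(\<lambda>n. s n - L) \<longlonglongrightarrow> 0"
      using Lim_null_comparison[OF always_eventually[OF b1] l1] .
    then show ?thesis by (rule LIM_zero_cancel)
  qed
  have pw0: "(\<lambda>n. pw E (Suc n)) \<longlonglongrightarrow> 0"
  proof -
    have l2: "(\<lambda>n. \<bar>C\<bar> * (q ^ Suc n)) \<longlonglongrightarrow> 0"
      using tendsto_mult_right_zero[OF LIMSEQ_Suc[OF \<open>(\<lambda>n. q ^ n) \<longlonglongrightarrow> 0\<close>]] by simp
    have b2: "\<forall>n. norm (pw E (Suc n)) \<le> \<bar>C\<bar> * q ^ Suc n"
    proof
      fix n
      have "norm (pw E (Suc n)) \<le> \<bar>C\<bar> * N (pw E (Suc n))"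
        using order_trans[OF C[OF pwA] mult_right_mono[OF abs_ge_self Npos[OF pwA]]] .
      also have "\<dots> \<le> \<bar>C\<bar> * q ^ Suc n" using pwN by (simp add: mult_left_mono)
      finally show "norm (pw E (Suc n)) \<le> \<bar>C\<bar> * q ^ Suc n" .
    qed
    show ?thesis
      using Lim_null_comparison[OF always_eventually[OF b2] l2] .
  qed
  have ar: "X o\<^sub>L (Y + Z) = (X o\<^sub>L Y) + (X o\<^sub>L Z)" for X Y Z :: "'a \<Rightarrow>\<^sub>L 'a"
    by (rule bounded_bilinear.add_right[OF bounded_bilinear_blinfun_compose])
  have al: "(Y + Z) o\<^sub>L X = (Y o\<^sub>L X) + (Z o\<^sub>L X)" for X Y Z :: "'a \<Rightarrow>\<^sub>L 'a"
    by (rule bounded_bilinear.add_left[OF bounded_bilinear_blinfun_compose])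
  have dl: "(Y - Z) o\<^sub>L X = (Y o\<^sub>L X) - (Z o\<^sub>L X)" for X Y Z :: "'a \<Rightarrow>\<^sub>L 'a"
    by (rule bounded_bilinear.diff_left[OF bounded_bilinear_blinfun_compose])
  have dr: "X o\<^sub>L (Y - Z) = (X o\<^sub>L Y) - (X o\<^sub>L Z)" for X Y Z :: "'a \<Rightarrow>\<^sub>L 'a"
    by (rule bounded_bilinear.diff_right[OF bounded_bilinear_blinfun_compose])
  have idl: "(id_blinfun - E) o\<^sub>L (id_blinfun + s n) = id_blinfun - pw E (Suc n)" for n
  proof (induction n)
    case 0 show ?case by (simp add: s_def)
  next
    case (Suc n)
    have "(id_blinfun - E) o\<^sub>L (id_blinfun + s (Suc n)) =
        ((id_blinfun - E) o\<^sub>L (id_blinfun + s n)) + ((id_blinfun - E) o\<^sub>L pw E (Suc n))"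
      unfolding sSuc add.assoc[symmetric] by (rule ar)
    also have "\<dots> = (id_blinfun - pw E (Suc n)) + (pw E (Suc n) - pw E (Suc (Suc n)))"
    proof -
      have h: "(id_blinfun - E) o\<^sub>L pw E (Suc n) = pw E (Suc n) - pw E (Suc (Suc n))"
        unfolding dl by simp
      show ?thesis unfolding Suc h ..
    qed
    also have "\<dots> = id_blinfun - pw E (Suc (Suc n))" by simp
    finally show ?case .
  qed
  have idr: "(id_blinfun + s n) o\<^sub>L (id_blinfun - E) = id_blinfun - pw E (Suc n)" for n
  proof (induction n)
    case 0 show ?case by (simp add: s_def)
  next
    case (Suc n)
    have "(id_blinfun + s (Suc n)) o\<^sub>L (id_blinfun - E) =
        ((id_blinfun + s n) o\<^sub>L (id_blinfun - E)) + (pw E (Suc n) o\<^sub>L (id_blinfun - E))"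
      unfolding sSuc add.assoc[symmetric] by (rule al)
    also have "\<dots> = (id_blinfun - pw E (Suc n)) + (pw E (Suc n) - pw E (Suc (Suc n)))"
    proof -
      have h: "pw E (Suc n) o\<^sub>L (id_blinfun - E) = pw E (Suc n) - pw E (Suc (Suc n))"
        unfolding dr pw_Suc'[of E "Suc n"] by (simp del: pw.simps)
      show ?thesis unfolding Suc h ..
    qed
    also have "\<dots> = id_blinfun - pw E (Suc (Suc n))" by simp
    finally show ?case .
  qed
  have lim1: "(\<lambda>n. id_blinfun - pw E (Suc n)) \<longlonglongrightarrow> (id_blinfun :: 'a \<Rightarrow>\<^sub>L 'a)"
    using tendsto_diff[OF tendsto_const pw0] by simp
  have "(\<lambda>n. (id_blinfun - E) o\<^sub>L (id_blinfun + s n)) \<longlonglongrightarrow> ((id_blinfun - E) o\<^sub>L (id_blinfun + L))"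
    using bounded_bilinear.tendsto[OF bounded_bilinear_blinfun_compose] tendsto_add[OF tendsto_const sL] tendsto_const by blast
  then have e1: "(id_blinfun - E) o\<^sub>L (id_blinfun + L) = id_blinfun"
    unfolding idl using lim1 by (rule LIMSEQ_unique)
  have "(\<lambda>n. (id_blinfun + s n) o\<^sub>L (id_blinfun - E)) \<longlonglongrightarrow> ((id_blinfun + L) o\<^sub>L (id_blinfun - E))"
    using bounded_bilinear.tendsto[OF bounded_bilinear_blinfun_compose] tendsto_add[OF tendsto_const sL] tendsto_const by blast
  then have e2: "(id_blinfun + L) o\<^sub>L (id_blinfun - E) = id_blinfun"
    unfolding idr using lim1 by (rule LIMSEQ_unique)
  show ?thesis using LA e1 e2 by blast
qed


lemma bsa_facts:
  assumes "banach_op_subalgebra A N"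
  shows "subspace A" and "\<And>S T. S \<in> A \<Longrightarrow> T \<in> A \<Longrightarrow> S o\<^sub>L T \<in> A"
proof -
  note a = assms[unfolded banach_op_subalgebra_def]
  have b1: "0 \<in> A" using a by (elim conjE)
  have b2: "\<forall>S\<in>A. \<forall>T\<in>A. S + T \<in> A" using a by (elim conjE)
  have b3: "\<forall>c. \<forall>S\<in>A. c *\<^sub>R S \<in> A" using a by (elim conjE)
  have b4: "\<forall>S\<in>A. \<forall>T\<in>A. S o\<^sub>L T \<in> A" using a by (elim conjE)
  show "subspace A" unfolding subspace_def using b1 b2 b3 by (intro conjI)
  show "\<And>S T. S \<in> A \<Longrightarrow> T \<in> A \<Longrightarrow> S o\<^sub>L T \<in> A" using b4 by blast
qed

lemma span_pw_in:
  assumes bsa: "banach_op_subalgebra A N" and TA: "T \<in> A"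
  shows "span (range (\<lambda>k. pw T (Suc k))) \<subseteq> A"
proof (rule span_minimal[OF _ bsa_facts(1)[OF bsa]])
  have "pw T (Suc k) \<in> A" for k
  proof (induction k)
    case 0 show ?case using TA by simp
  next
    case (Suc k)
    have "pw T (Suc (Suc k)) = T o\<^sub>L pw T (Suc k)" by (rule pw.simps(2))
    then show ?case using bsa_facts(2)[OF bsa TA Suc] by simp
  qed
  then show "range (\<lambda>k. pw T (Suc k)) \<subseteq> A" by blast
qed

lemma decomp:
  fixes T F P :: "'a::real_normed_vector \<Rightarrow>\<^sub>L 'a"
  assumes inj: "\<And>f. blinfun_apply T f = f \<Longrightarrow> f = 0" and frF: "finite_rank F"
    and P1: "P o\<^sub>L (id_blinfun - (T - F)) = id_blinfun"
    and P2: "(id_blinfun - (T - F)) o\<^sub>L P = id_blinfun"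
  shows "\<exists>R\<in>span (range (\<lambda>k. pw (P o\<^sub>L F) (Suc k))).
           ((id_blinfun + R) o\<^sub>L P) o\<^sub>L (id_blinfun - T) = id_blinfun \<and>
           (id_blinfun - T) o\<^sub>L ((id_blinfun + R) o\<^sub>L P) = id_blinfun"
proof -
  define E where "E = T - F"
  define G where "G = P o\<^sub>L F"
  have hP1: "blinfun_apply P (x - blinfun_apply E x) = x" for x
    using arg_cong[OF P1, of "\<lambda>X. blinfun_apply X x"] unfolding E_def[symmetric]
    by (simp add: blinfun.diff_left)
  have hP2: "blinfun_apply P x - blinfun_apply E (blinfun_apply P x) = x" for x
    using arg_cong[OF P2, of "\<lambda>X. blinfun_apply X x"] unfolding E_def[symmetric]
    by (simp add: blinfun.diff_left)
  have key: "y - blinfun_apply T y = (y - blinfun_apply G y) - blinfun_apply E (y - blinfun_apply G y)" for y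
  proof -
    have h1: "blinfun_apply G y - blinfun_apply E (blinfun_apply G y) = blinfun_apply F y"
      using hP2[of "blinfun_apply F y"] unfolding G_def by simp
    have h2: "blinfun_apply E y = blinfun_apply T y - blinfun_apply F y"
      unfolding E_def by (simp add: blinfun.diff_left)
    have "blinfun_apply E (y - blinfun_apply G y) = blinfun_apply E y - blinfun_apply E (blinfun_apply G y)"
      by (rule blinfun.diff_right)
    then have "(y - blinfun_apply G y) - blinfun_apply E (y - blinfun_apply G y)
        = y - blinfun_apply E y - (blinfun_apply G y - blinfun_apply E (blinfun_apply G y))"
      by (simp add: algebra_simps)
    also have "\<dots> = y - blinfun_apply E y - blinfun_apply F y" unfolding h1 ..
    also have "\<dots> = y - blinfun_apply T y" unfolding h2 by (simp add: algebra_simps)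
    finally show ?thesis by simp
  qed
  have frG: "finite_rank G"
  proof -
    obtain B where B: "finite B" "range (blinfun_apply F) \<subseteq> span B"
      using frF unfolding finite_rank_def by blast
    have lP: "linear (blinfun_apply P)" by (rule bounded_linear.linear[OF blinfun.bounded_linear_right])
    have "range (blinfun_apply G) \<subseteq> blinfun_apply P ` span B"
      unfolding G_def using B(2) by auto
    also have "\<dots> = span (blinfun_apply P ` B)" using linear_span_image[OF lP] by metis
    finally show ?thesis unfolding finite_rank_def using B(1) by blast
  qed
  have injG: "f = 0" if "blinfun_apply G f = f" for f
  proof -
    have "blinfun_apply T f = f" using key[of f] that by simp
    then show ?thesis by (rule inj)
  qed
  obtain R where Rin: "R \<in> span (range (\<lambda>k. pw G (Suc k)))"
    and R1: "R - (G o\<^sub>L R) = G" and R2: "R o\<^sub>L G = G o\<^sub>L R"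
    using FR[OF frG injG] by blast
  have hR1: "blinfun_apply R y - blinfun_apply G (blinfun_apply R y) = blinfun_apply G y" for y
    using arg_cong[OF R1, of "\<lambda>X. blinfun_apply X y"] by (simp add: blinfun.diff_left)
  have hR2: "blinfun_apply R (blinfun_apply G y) = blinfun_apply G (blinfun_apply R y)" for y
    using arg_cong[OF R2, of "\<lambda>X. blinfun_apply X y"] by simp
  have g1: "((id_blinfun + R) o\<^sub>L P) o\<^sub>L (id_blinfun - T) = id_blinfun"
  proof (rule blinfun_eqI)
    fix x
    have z: "blinfun_apply P (x - blinfun_apply T x) = x - blinfun_apply G x"
      unfolding key by (rule hP1)
    have "x - blinfun_apply G x + blinfun_apply R (x - blinfun_apply G x) = x"
      using hR1[of x] hR2[of x] by (simp add: blinfun.diff_right algebra_simps)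
    then show "blinfun_apply (((id_blinfun + R) o\<^sub>L P) o\<^sub>L (id_blinfun - T)) x = blinfun_apply id_blinfun x"
      using z by (simp add: blinfun.add_left blinfun.diff_left)
  qed
  have g2: "(id_blinfun - T) o\<^sub>L ((id_blinfun + R) o\<^sub>L P) = id_blinfun"
  proof (rule blinfun_eqI)
    fix x
    define v where "v = blinfun_apply P x"
    define w where "w = v + blinfun_apply R v"
    have "w - blinfun_apply G w = v"
      unfolding w_def using hR1[of v] by (simp add: blinfun.add_right algebra_simps)
    then have "w - blinfun_apply T w = x" unfolding key using hP2[of x] v_def by simp
    then show "blinfun_apply ((id_blinfun - T) o\<^sub>L ((id_blinfun + R) o\<^sub>L P)) x = blinfun_apply id_blinfun x"
      unfolding w_def v_def by (simp add: blinfun.add_left blinfun.diff_left)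
  qed
  show ?thesis using Rin g1 g2 unfolding G_def by blast
qed

theorem mainTheorem9:
  fixes T :: "'a::banach \<Rightarrow>\<^sub>L 'a"
  assumes "approx_finite_rank T"
  shows "(\<exists>f. f \<noteq> 0 \<and> blinfun_apply T f = f) \<or>
         (\<exists>S. S o\<^sub>L (id_blinfun - T) = id_blinfun \<and> (id_blinfun - T) o\<^sub>L S = id_blinfun \<and>
              (\<forall>A N. banach_op_subalgebra A N \<and> finite_rank T \<and> T \<in> A
                  \<longrightarrow> S - id_blinfun \<in> A) \<and>
              (\<forall>A N. banach_op_subalgebra A N \<and>
                  (\<exists>C. \<forall>T1\<in>A. \<forall>T2\<in>A. \<forall>R.
                       T1 o\<^sub>L R o\<^sub>L T2 \<in> A \<and> N (T1 o\<^sub>L R o\<^sub>L T2) \<le> C * N T1 * norm R * N T2) \<and>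
                  T \<in> A \<and> (\<forall>e>0. \<exists>F\<in>A. finite_rank F \<and> N (T - F) < e)
                  \<longrightarrow> S - id_blinfun \<in> A))"
proof (cases "\<exists>f. f \<noteq> 0 \<and> blinfun_apply T f = f")
  case True
  then show ?thesis by blast
next
  case False
  then have inj: "\<And>f. blinfun_apply T f = f \<Longrightarrow> f = 0" by blast
  have "T \<in> closure {S. finite_rank S}" using assms unfolding approx_finite_rank_def .
  then have "\<exists>y\<in>{S. finite_rank S}. dist y T < 1" unfolding closure_approachable by simp
  then obtain F where F: "finite_rank F" "dist F T < 1" by blast
  have nE: "norm (T - F) < 1" using F(2) by (simp add: dist_norm norm_minus_commute)
  obtain L where "L \<in> (UNIV :: ('a \<Rightarrow>\<^sub>L 'a) set)"
    and L1: "(id_blinfun - (T - F)) o\<^sub>L (id_blinfun + L) = id_blinfun"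
    and L2: "(id_blinfun + L) o\<^sub>L (id_blinfun - (T - F)) = id_blinfun"
    using neumannA[OF bsa_UNIV _ nE] by blast
  obtain R where "R \<in> span (range (\<lambda>k. pw ((id_blinfun + L) o\<^sub>L F) (Suc k)))"
    and S1: "((id_blinfun + R) o\<^sub>L (id_blinfun + L)) o\<^sub>L (id_blinfun - T) = id_blinfun"
    and S2: "(id_blinfun - T) o\<^sub>L ((id_blinfun + R) o\<^sub>L (id_blinfun + L)) = id_blinfun"
    using decomp[OF inj F(1) L2 L1] by blast
  define S where "S = (id_blinfun + R) o\<^sub>L (id_blinfun + L)"
  have S1': "S o\<^sub>L (id_blinfun - T) = id_blinfun" using S1 unfolding S_def .
  have S2': "(id_blinfun - T) o\<^sub>L S = id_blinfun" using S2 unfolding S_def .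
  have ar: "X o\<^sub>L (Y + Z) = (X o\<^sub>L Y) + (X o\<^sub>L Z)" for X Y Z :: "'a \<Rightarrow>\<^sub>L 'a"
    by (rule bounded_bilinear.add_right[OF bounded_bilinear_blinfun_compose])
  have al: "(Y + Z) o\<^sub>L X = (Y o\<^sub>L X) + (Z o\<^sub>L X)" for X Y Z :: "'a \<Rightarrow>\<^sub>L 'a"
    by (rule bounded_bilinear.add_left[OF bounded_bilinear_blinfun_compose])
  have dr: "X o\<^sub>L (Y - Z) = (X o\<^sub>L Y) - (X o\<^sub>L Z)" for X Y Z :: "'a \<Rightarrow>\<^sub>L 'a"
    by (rule bounded_bilinear.diff_right[OF bounded_bilinear_blinfun_compose])
  have dl: "(Y - Z) o\<^sub>L X = (Y o\<^sub>L X) - (Z o\<^sub>L X)" for X Y Z :: "'a \<Rightarrow>\<^sub>L 'a"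
    by (rule bounded_bilinear.diff_left[OF bounded_bilinear_blinfun_compose])
  have part1: "S - id_blinfun \<in> A" if h: "banach_op_subalgebra A N" "finite_rank T" "T \<in> A" for A N
  proof -
    obtain R1 where R1in: "R1 \<in> span (range (\<lambda>k. pw T (Suc k)))"
      and R11: "R1 - (T o\<^sub>L R1) = T" and R12: "R1 o\<^sub>L T = T o\<^sub>L R1"
      using FR[OF h(2) inj] by blast
    have "(id_blinfun - T) o\<^sub>L (id_blinfun + R1) = id_blinfun - T + (R1 - (T o\<^sub>L R1))"
      unfolding ar dl by simp
    also have "\<dots> = id_blinfun" unfolding R11 by simp
    finally have "(id_blinfun - T) o\<^sub>L (id_blinfun + R1) = id_blinfun" .
    then have "S = id_blinfun + R1" by (rule inverse_unique[OF S1'])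
    then have "S - id_blinfun = R1" by simp
    then show ?thesis using span_pw_in[OF h(1) h(3)] R1in by blast
  qed
  have part2: "S - id_blinfun \<in> A"
    if h: "banach_op_subalgebra A N" "T \<in> A" "\<forall>e>0. \<exists>F\<in>A. finite_rank F \<and> N (T - F) < e" for A N
  proof -
    have "\<exists>F\<in>A. finite_rank F \<and> N (T - F) < 1" using h(3) by simp
    then obtain F' where F': "F' \<in> A" "finite_rank F'" "N (T - F') < 1" by blast
    have sA: "subspace A" and cA: "\<And>S T. S \<in> A \<Longrightarrow> T \<in> A \<Longrightarrow> S o\<^sub>L T \<in> A"
      using bsa_facts[OF h(1)] by blast+
    have EA: "T - F' \<in> A" using subspace_diff[OF sA h(2) F'(1)] .
    obtain L' where L'A: "L' \<in> A"
      and L1': "(id_blinfun - (T - F')) o\<^sub>L (id_blinfun + L') = id_blinfun"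
      and L2': "(id_blinfun + L') o\<^sub>L (id_blinfun - (T - F')) = id_blinfun"
      using neumannA[OF h(1) EA F'(3)] by blast
    obtain R' where R'in: "R' \<in> span (range (\<lambda>k. pw ((id_blinfun + L') o\<^sub>L F') (Suc k)))"
      and S1'': "((id_blinfun + R') o\<^sub>L (id_blinfun + L')) o\<^sub>L (id_blinfun - T) = id_blinfun"
      and S2'': "(id_blinfun - T) o\<^sub>L ((id_blinfun + R') o\<^sub>L (id_blinfun + L')) = id_blinfun"
      using decomp[OF inj F'(2) L2' L1'] by blast
    have GA: "(id_blinfun + L') o\<^sub>L F' \<in> A"
    proof -
      have "(id_blinfun + L') o\<^sub>L F' = F' + (L' o\<^sub>L F')" unfolding al by simp
      then show ?thesis using subspace_add[OF sA F'(1) cA[OF L'A F'(1)]] by simp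
    qed
    have R'A: "R' \<in> A" using span_pw_in[OF h(1) GA] R'in by blast
    have "S = (id_blinfun + R') o\<^sub>L (id_blinfun + L')" using inverse_unique[OF S1' S2''] .
    then have "S - id_blinfun = L' + (R' + (R' o\<^sub>L L'))" unfolding al ar by simp
    then show ?thesis
      using subspace_add[OF sA L'A subspace_add[OF sA R'A cA[OF R'A L'A]]] by simp
  qed
  show ?thesis
  proof (rule disjI2, rule exI[of _ S], intro conjI allI impI)
    show "S o\<^sub>L (id_blinfun - T) = id_blinfun" by (rule S1')
    show "(id_blinfun - T) o\<^sub>L S = id_blinfun" by (rule S2')
  next
    fix A N assume "banach_op_subalgebra A N \<and> finite_rank T \<and> T \<in> A"
    then show "S - id_blinfun \<in> A" using part1 by blast
  next
    fix A N
    assume h: "banach_op_subalgebra A N \<and>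
                  (\<exists>C. \<forall>T1\<in>A. \<forall>T2\<in>A. \<forall>R.
                       T1 o\<^sub>L R o\<^sub>L T2 \<in> A \<and> N (T1 o\<^sub>L R o\<^sub>L T2) \<le> C * N T1 * norm R * N T2) \<and>
                  T \<in> A \<and> (\<forall>e>0. \<exists>F\<in>A. finite_rank F \<and> N (T - F) < e)"
    then have h1: "banach_op_subalgebra A N" and h2: "T \<in> A"
      and h3: "\<forall>e>0. \<exists>F\<in>A. finite_rank F \<and> N (T - F) < e" by simp_all
    show "S - id_blinfun \<in> A" by (rule part2[OF h1 h2 h3])
  qed
qed
end
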